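(* For every integer $n\geq 1$, $$\mathrm{SH}_n=\sum_{\substack{\lambda\vdash n\\ \text{all parts }\lambda_i\text{ odd}}} z_\lambda^{-1}\,2^{\ell(\lambda)}(n+1)^{\ell(\lambda)-1}\,p_\lambda ,$$ where $\ell(\lambda)$ is the number of nonzero parts of $\lambda$ and $z_\lambda=\prod_i i^{m_i}m_i!$ when $\lambda$ has $m_i$ parts equal to $i$.
   Context: Work in the ring $\Lambda_{\mathbb Q}$ of symmetric functions with rational coefficients in variables $x=(x_1,x_2,\dots)$; $p_k$ denotes the power sum, $p_\lambda=p_{\lambda_1}p_{\lambda_2}\cdots$. For $f\in\Lambda_{\mathbb Q}$, its shiftification $f(x/x)$ is obtained by writing $f$ as a polynomial in the power sums and substituting $p_{2i+1}\mapsto 2p_{2i+1}$ and $p_{2i}\mapsto 0$ for all $i\ge1$ (equivalently, $f(x/x)=(\omega_y f(x,y))|_{y=x}$, where $\omega_y$ is the involution $\omega$ acting on a second variable set $y$ only). A parking function of length $n$ is a sequence $(a_1,\dots,a_n)$ of positive integers whose weakly increasing rearrangement $b_1\le\cdots\le b_n$ satisfies $b_i\le i$ for all $i$. The symmetric group $S_n$ acts on the set of parking functions of length $n$ by permuting coordinates; $\mathrm{PF}_n$ denotes the Frobenius characteristic of this permutation representation ($\mathrm{PF}_0=1$). Define $\mathrm{SH}_n(x)=\mathrm{PF}_n(x/x)$. *)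

theory Defs
  imports Complex_Main "HOL-Library.Multiset" "HOL-Combinatorics.Permutations"
begin

text \<open>Symmetric functions over Q are represented by their coefficients in the
power-sum basis: Lambda_Q = Q[p_1,p_2,...] has basis p_lambda indexed by partitions,
a partition being a finite multiset of positive naturals.  An element is the
(finitely supported) coefficient function.\<close>

type_synonym symfun = "nat multiset \<Rightarrow> rat"

definition psum :: "nat multiset \<Rightarrow> symfun" where
  "psum lam = (\<lambda>mu. if mu = lam then 1 else 0)"

definition parking_function :: "nat list \<Rightarrow> bool" where
  "parking_function a \<longleftrightarrow>
     (\<forall>i<length a. 1 \<le> sort a ! i \<and> sort a ! i \<le> i + 1)"

definition parking_functions :: "nat \<Rightarrow> nat list set" where
  "parking_functions n = {a. length a = n \<and> parking_function a}"

definition perm_act :: "(nat \<Rightarrow> nat) \<Rightarrow> nat list \<Rightarrow> nat list" where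
  "perm_act \<sigma> a = map (\<lambda>i. a ! (inv \<sigma> i)) [0..<length a]"

definition cycle_type :: "nat \<Rightarrow> (nat \<Rightarrow> nat) \<Rightarrow> nat multiset" where
  "cycle_type n \<sigma> =
     image_mset card (mset_set ((\<lambda>x. {(\<sigma> ^^ k) x | k. True}) ` {..<n}))"

definition frob :: "nat \<Rightarrow> ((nat \<Rightarrow> nat) \<Rightarrow> rat) \<Rightarrow> symfun" where
  "frob n \<chi> = (\<lambda>mu. (1 / fact n) *
      (\<Sum>\<sigma>\<in>{\<sigma>. \<sigma> permutes {..<n} \<and> cycle_type n \<sigma> = mu}. \<chi> \<sigma>))"

text \<open>PF_n: Frobenius characteristic of the permutation representation on parking
functions; its character is the number of fixed points.\<close>
definition PF :: "nat \<Rightarrow> symfun" where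
  "PF n = frob n (\<lambda>\<sigma>. of_nat (card {a \<in> parking_functions n. perm_act \<sigma> a = a}))"

text \<open>Shiftification: p_{odd k} -> 2 p_k, p_{even k} -> 0, extended multiplicatively
and linearly; on the power-sum coefficients this is the following map.\<close>
definition shiftify :: "symfun \<Rightarrow> symfun" where
  "shiftify f = (\<lambda>mu. if (\<forall>i\<in>#mu. odd i) then 2 ^ size mu * f mu else 0)"

definition SH :: "nat \<Rightarrow> symfun" where
  "SH n = shiftify (PF n)"

definition zee :: "nat multiset \<Rightarrow> rat" where
  "zee lam = (\<Prod>i\<in>set_mset lam. of_nat (i ^ count lam i * fact (count lam i)))"

definition odd_partitions :: "nat \<Rightarrow> nat multiset set" where
  "odd_partitions n = {lam. (\<forall>i\<in>#lam. 0 < i \<and> odd i) \<and> sum_mset lam = n}"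

end

theory Submission
  imports Defs "HOL-Combinatorics.Orbits"
begin


definition orb :: "(nat \<Rightarrow> nat) \<Rightarrow> nat \<Rightarrow> nat set" where
  "orb f x = {(f ^^ k) x | k. True}"

definition ctS :: "nat set \<Rightarrow> (nat \<Rightarrow> nat) \<Rightarrow> nat multiset" where
  "ctS S f = image_mset card (mset_set (orb f ` S))"

lemma cycle_type_ctS: "cycle_type n \<sigma> = ctS {..<n} \<sigma>"
  unfolding cycle_type_def ctS_def orb_def by simp

definition nxt :: "nat list \<Rightarrow> nat \<Rightarrow> nat" where
  "nxt L y = the (map_of (zip L (rotate1 L)) y)"

definition glue :: "nat list \<Rightarrow> (nat \<Rightarrow> nat) \<Rightarrow> nat \<Rightarrow> nat" where
  "glue L \<tau> = (\<lambda>y. if y \<in> set L then nxt L y else \<tau> y)"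

lemma nxt_nth:
  assumes "distinct L" "i < length L"
  shows "nxt L (L ! i) = L ! (Suc i mod length L)"
  using assms unfolding nxt_def by (simp add: map_of_zip_nth nth_rotate1)

lemma glue_pow_L:
  assumes "distinct L" "j < length L"
  shows "(glue L \<tau> ^^ i) (L ! j) = L ! ((j + i) mod length L)"
proof (induction i)
  case 0
  then show ?case using assms by simp
next
  case (Suc i)
  have lt: "(j + i) mod length L < length L" by (rule mod_less_divisor) (use assms in auto)
  have "(glue L \<tau> ^^ Suc i) (L ! j) = glue L \<tau> (L ! ((j + i) mod length L))"
    using Suc by simp
  also have "\<dots> = nxt L (L ! ((j + i) mod length L))"
    unfolding glue_def using lt by simp
  also have "\<dots> = L ! (Suc ((j + i) mod length L) mod length L)"
    using nxt_nth[OF assms(1) lt] .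
  also have "\<dots> = L ! ((j + Suc i) mod length L)"
    by (simp add: mod_Suc_eq)
  finally show ?case .
qed

lemma orb_glue_L:
  assumes "distinct L" "j < length L"
  shows "orb (glue L \<tau>) (L ! j) = set L"
proof
  show "orb (glue L \<tau>) (L ! j) \<subseteq> set L"
  proof
    fix y assume "y \<in> orb (glue L \<tau>) (L ! j)"
    then obtain i where "y = (glue L \<tau> ^^ i) (L ! j)" unfolding orb_def by blast
    then have "y = L ! ((j + i) mod length L)" using glue_pow_L[OF assms] by simp
    moreover have "(j + i) mod length L < length L" by (rule mod_less_divisor) (use assms in auto)
    ultimately show "y \<in> set L" by simp
  qed
next
  show "set L \<subseteq> orb (glue L \<tau>) (L ! j)"
  proof
    fix y assume "y \<in> set L"
    then obtain t where t: "t < length L" "y = L ! t" by (auto simp: in_set_conv_nth)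
    have "j + (t + length L - j) = t + length L" using assms(2) by linarith
    then have e: "(j + (t + length L - j)) mod length L = t"
      using t(1) by simp
    have "(glue L \<tau> ^^ (t + length L - j)) (L ! j) = L ! ((j + (t + length L - j)) mod length L)"
      by (rule glue_pow_L[OF assms])
    also have "\<dots> = y" unfolding e using t by simp
    finally have "(glue L \<tau> ^^ (t + length L - j)) (L ! j) = y" .
    then show "y \<in> orb (glue L \<tau>) (L ! j)" unfolding orb_def by blast
  qed
qed

lemma permutes_funpow_in:
  assumes "\<tau> permutes T" "y \<in> T"
  shows "(\<tau> ^^ i) y \<in> T"
proof (induction i)
  case 0 then show ?case using assms(2) by simp
next
  case (Suc i) then show ?case using assms(1) by (simp add: permutes_in_image)
qed

lemma glue_pow_T:
  assumes "\<tau> permutes T" "set L \<inter> T = {}" "y \<in> T"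
  shows "(glue L \<tau> ^^ i) y = (\<tau> ^^ i) y"
proof (induction i)
  case 0 then show ?case by simp
next
  case (Suc i)
  have "(\<tau> ^^ i) y \<in> T" by (rule permutes_funpow_in[OF assms(1,3)])
  then have "(\<tau> ^^ i) y \<notin> set L" using assms(2) by blast
  then show ?case using Suc by (simp add: glue_def)
qed

lemma orb_glue_T:
  assumes "\<tau> permutes T" "set L \<inter> T = {}" "y \<in> T"
  shows "orb (glue L \<tau>) y = orb \<tau> y"
  using glue_pow_T[OF assms] unfolding orb_def by simp

lemma Suc_mod_if: "i < n \<Longrightarrow> Suc i mod n = (if Suc i = n then 0 else Suc i)"
  by auto

lemma bij_nxt:
  assumes "distinct L"
  shows "bij_betw (nxt L) (set L) (set L)"
proof -
  have inj: "inj_on (nxt L) (set L)"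
  proof (rule inj_onI)
    fix a b assume a: "a \<in> set L" and b: "b \<in> set L" and e: "nxt L a = nxt L b"
    obtain i where i: "i < length L" "a = L ! i" using a by (auto simp: in_set_conv_nth)
    obtain j where j: "j < length L" "b = L ! j" using b by (auto simp: in_set_conv_nth)
    have "L ! (Suc i mod length L) = L ! (Suc j mod length L)"
      using e i j nxt_nth assms by simp
    moreover have "Suc i mod length L < length L" by (rule mod_less_divisor) (use i(1) in auto)
    moreover have "Suc j mod length L < length L" by (rule mod_less_divisor) (use i(1) in auto)
    ultimately have "Suc i mod length L = Suc j mod length L"
      using assms by (simp add: nth_eq_iff_index_eq)
    then have "i = j" using i j by (auto simp: Suc_mod_if split: if_splits)
    then show "a = b" using i j by simp
  qed
  have im: "nxt L ` set L = set L"
  proof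
    show "nxt L ` set L \<subseteq> set L"
    proof
      fix y assume "y \<in> nxt L ` set L"
      then obtain i where i: "i < length L" "y = nxt L (L ! i)" by (auto simp: in_set_conv_nth)
      have "Suc i mod length L < length L" by (rule mod_less_divisor) (use i(1) in auto)
      then show "y \<in> set L" using i nxt_nth[OF assms] by simp
    qed
    show "set L \<subseteq> nxt L ` set L"
    proof
      fix y assume "y \<in> set L"
      then obtain t where t: "t < length L" "y = L ! t" by (auto simp: in_set_conv_nth)
      define u where "u = (if t = 0 then length L - 1 else t - 1)"
      have u: "u < length L" using t by (auto simp add: u_def)
      have "Suc u mod length L = t" using u t by (auto simp: u_def Suc_mod_if)
      then have "nxt L (L ! u) = y" using nxt_nth[OF assms u] t by simp
      moreover have "L ! u \<in> set L" using u by simp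
      ultimately show "y \<in> nxt L ` set L" by blast
    qed
  qed
  show ?thesis using inj im by (simp add: bij_betw_def)
qed

lemma glue_permutes:
  assumes "distinct L" "\<tau> permutes T" "set L \<inter> T = {}"
  shows "glue L \<tau> permutes (set L \<union> T)"
proof (rule bij_imp_permutes)
  have "bij_betw \<tau> T T" using assms(2) by (rule permutes_imp_bij)
  then show "bij_betw (glue L \<tau>) (set L \<union> T) (set L \<union> T)"
    unfolding glue_def using bij_nxt[OF assms(1)] assms(3) by (intro bij_betw_disjoint_Un) auto
next
  fix y assume "y \<notin> set L \<union> T"
  then show "glue L \<tau> y = y" using assms(2) by (auto simp: glue_def permutes_not_in)
qed

lemma self_in_orb: "y \<in> orb f y"
  unfolding orb_def by (metis (mono_tags, lifting) funpow_0 mem_Collect_eq)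

lemma ctS_glue:
  assumes "distinct L" "L \<noteq> []" "\<tau> permutes T" "set L \<inter> T = {}" "finite T"
  shows "ctS (set L \<union> T) (glue L \<tau>) = add_mset (length L) (ctS T \<tau>)"
proof -
  have 1: "orb (glue L \<tau>) ` set L = {set L}"
  proof -
    have "\<forall>y\<in>set L. orb (glue L \<tau>) y = set L"
    proof
      fix y assume "y \<in> set L"
      then obtain j where "j < length L" "y = L ! j" by (auto simp: in_set_conv_nth)
      then show "orb (glue L \<tau>) y = set L" using orb_glue_L[OF assms(1)] by simp
    qed
    then have "orb (glue L \<tau>) ` set L = (\<lambda>_. set L) ` set L" by (intro image_cong) auto
    then show ?thesis using assms(2) by (simp add: image_constant_conv)
  qed
  have 2: "orb (glue L \<tau>) ` T = orb \<tau> ` T"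
    using orb_glue_T[OF assms(3,4)] by simp
  have 3: "set L \<notin> orb \<tau> ` T"
    using self_in_orb assms(4) by blast
  have "orb (glue L \<tau>) ` (set L \<union> T) = insert (set L) (orb \<tau> ` T)"
    using 1 2 by (simp add: image_Un)
  then have "mset_set (orb (glue L \<tau>) ` (set L \<union> T)) = add_mset (set L) (mset_set (orb \<tau> ` T))"
    using 3 assms(5) by simp
  then show ?thesis unfolding ctS_def using assms(1) by (simp add: distinct_card)
qed


lemma decompose:
  assumes "\<sigma> permutes S" "finite S" "x \<in> S"
  obtains L where "distinct L" "L \<noteq> []" "hd L = x" "set L \<subseteq> S"
    "perm_restrict \<sigma> (S - set L) permutes (S - set L)"
    "\<sigma> = glue L (perm_restrict \<sigma> (S - set L))"
proof -
  have perm: "permutation \<sigma>" using assms(1,2) permutation_permutes by blast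
  have xin: "x \<in> orbit \<sigma> x" by (rule permutation_self_in_orbit[OF perm])
  define p where "p = funpow_dist1 \<sigma> x x"
  have pp: "(\<sigma> ^^ p) x = x" using funpow_dist1_prop[OF xin] p_def by simp
  have p0: "0 < p" by (simp add: p_def)
  have inj: "inj_on (\<lambda>n. (\<sigma> ^^ n) x) {0..<p}" using inj_on_funpow_dist1[OF xin] p_def by simp
  have orbit_eq: "orbit \<sigma> x = (\<lambda>n. (\<sigma> ^^ n) x) ` {0..<p}"
    using orbit_conv_funpow_dist1[OF xin] p_def by simp
  define L where "L = map (\<lambda>n. (\<sigma> ^^ n) x) [0..<p]"
  have len: "length L = p" by (simp add: L_def)
  have dist: "distinct L" by (simp add: L_def distinct_map inj)
  have ne: "L \<noteq> []" using p0 by (simp add: L_def)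
  have hd: "hd L = x" using p0 by (simp add: L_def hd_map)
  have setL: "set L = orbit \<sigma> x" by (simp add: L_def orbit_eq)
  have sub: "set L \<subseteq> S" using setL permutes_orbit_subset[OF assms(1,3)] by simp
  have cyc: "cyclic_on \<sigma> (set L)" using cyclic_on_orbit[OF assms(1,2)] setL by simp
  have tperm: "perm_restrict \<sigma> (S - set L) permutes (S - set L)"
    by (rule perm_restrict_diff_cyclic[OF assms(1) cyc])
  have eq: "\<sigma> = glue L (perm_restrict \<sigma> (S - set L))"
  proof
    fix y
    show "\<sigma> y = glue L (perm_restrict \<sigma> (S - set L)) y"
    proof (cases "y \<in> set L")
      case True
      then obtain i where i: "i < p" "y = L ! i" using len by (auto simp: in_set_conv_nth)
      have yi: "y = (\<sigma> ^^ i) x" using i by (simp add: L_def)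
      have lt: "Suc i mod p < p" using p0 by simp
      have "glue L (perm_restrict \<sigma> (S - set L)) y = nxt L (L ! i)"
        using True i by (simp add: glue_def)
      also have "\<dots> = L ! (Suc i mod p)" using nxt_nth[OF dist] i len by simp
      also have "\<dots> = (\<sigma> ^^ (Suc i mod p)) x" using lt by (simp add: L_def)
      also have "\<dots> = (\<sigma> ^^ Suc i) x" by (rule funpow_mod_eq[OF pp])
      also have "\<dots> = \<sigma> y" using yi by simp
      finally show ?thesis by simp
    next
      case False
      then show ?thesis using assms(1)
        by (auto simp: glue_def perm_restrict_def permutes_not_in)
    qed
  qed
  show ?thesis using that dist ne hd sub tperm eq by blast
qed

lemma ctS_empty: "ctS {} f = {#}"
  by (simp add: ctS_def)

lemma ctS_split:
  assumes "\<sigma> permutes S" "finite S" "distinct L" "L \<noteq> []" "set L \<subseteq> S"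
    "\<tau> permutes (S - set L)" "\<sigma> = glue L \<tau>"
  shows "ctS S \<sigma> = add_mset (length L) (ctS (S - set L) \<tau>)"
proof -
  have S: "S = set L \<union> (S - set L)" using assms(5) by blast
  have "ctS (set L \<union> (S - set L)) (glue L \<tau>) = add_mset (length L) (ctS (S - set L) \<tau>)"
    by (rule ctS_glue) (use assms in auto)
  then show ?thesis using S assms(7) by simp
qed

lemma ctS_props:
  assumes "\<sigma> permutes S" "finite S"
  shows "sum_mset (ctS S \<sigma>) = card S \<and> (\<forall>i\<in>#ctS S \<sigma>. 0 < i)"
  using assms(2,1)
proof (induction S arbitrary: \<sigma> rule: finite_psubset_induct)
  case (psubset S)
  show ?case
  proof (cases "S = {}")
    case True then show ?thesis by (simp add: ctS_empty)
  next
    case False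
    then obtain x where x: "x \<in> S" by blast
    obtain L where L: "distinct L" "L \<noteq> []" "hd L = x" "set L \<subseteq> S"
      "perm_restrict \<sigma> (S - set L) permutes (S - set L)"
      "\<sigma> = glue L (perm_restrict \<sigma> (S - set L))"
      using decompose[OF psubset.prems psubset.hyps(1) x] by blast
    have xL: "x \<in> set L" using L(2,3) by (cases L) auto
    have ct: "ctS S \<sigma> = add_mset (length L) (ctS (S - set L) (perm_restrict \<sigma> (S - set L)))"
      by (rule ctS_split[OF psubset.prems psubset.hyps(1) L(1,2,4,5,6)])
    have IH: "sum_mset (ctS (S - set L) (perm_restrict \<sigma> (S - set L))) = card (S - set L) \<and>
       (\<forall>i\<in>#ctS (S - set L) (perm_restrict \<sigma> (S - set L)). 0 < i)"
      by (rule psubset.IH) (use xL x L(5) in auto)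
    have le: "length L \<le> card S" using L(1,4) psubset.hyps(1)
      by (metis card_mono distinct_card)
    have cS: "card S = length L + card (S - set L)"
      using L(1,4) psubset.hyps(1) le by (simp add: card_Diff_subset distinct_card)
    show ?thesis using IH ct cS L(2) by auto
  qed
qed

definition zf :: "nat multiset \<Rightarrow> nat \<Rightarrow> rat" where
  "zf lam i = of_nat (i ^ count lam i * fact (count lam i))"

lemma zee_over:
  assumes "finite A" "set_mset lam \<subseteq> A"
  shows "zee lam = (\<Prod>i\<in>A. zf lam i)"
proof -
  have "zee lam = (\<Prod>i\<in>set_mset lam. zf lam i)" by (simp add: zee_def zf_def)
  also have "\<dots> = (\<Prod>i\<in>A. zf lam i)"
    by (rule prod.mono_neutral_left) (use assms in \<open>auto simp: zf_def not_in_iff\<close>)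
  finally show ?thesis .
qed

lemma zee_remove:
  assumes "k \<in># mu"
  shows "zee mu = zee (mu - {#k#}) * of_nat (k * count mu k)"
proof -
  define nu where "nu = mu - {#k#}"
  have mu: "mu = add_mset k nu" using assms by (simp add: nu_def)
  have fin: "finite (set_mset mu)" by simp
  have k: "k \<in> set_mset mu" using assms by simp
  have "zee mu = (\<Prod>i\<in>set_mset mu. zf mu i)" by (rule zee_over[OF fin]) simp
  also have "\<dots> = zf mu k * (\<Prod>i\<in>set_mset mu - {k}. zf mu i)" by (rule prod.remove[OF fin k])
  finally have z1: "zee mu = zf mu k * (\<Prod>i\<in>set_mset mu - {k}. zf mu i)" .
  have "set_mset nu \<subseteq> set_mset mu" using mu by auto
  then have "zee nu = (\<Prod>i\<in>set_mset mu. zf nu i)" by (rule zee_over[OF fin])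
  also have "\<dots> = zf nu k * (\<Prod>i\<in>set_mset mu - {k}. zf nu i)" by (rule prod.remove[OF fin k])
  finally have z2: "zee nu = zf nu k * (\<Prod>i\<in>set_mset mu - {k}. zf nu i)" .
  have z3: "(\<Prod>i\<in>set_mset mu - {k}. zf mu i) = (\<Prod>i\<in>set_mset mu - {k}. zf nu i)"
    by (rule prod.cong) (auto simp: zf_def mu)
  have c: "count mu k = Suc (count nu k)" by (simp add: mu)
  have z4: "zf mu k = zf nu k * of_nat (k * count mu k)"
    unfolding zf_def c by (simp add: algebra_simps)
  show ?thesis using z1 z2 z3 z4 by (simp add: nu_def algebra_simps)
qed

lemma zee_nonzero:
  assumes "\<forall>i\<in>#lam. 0 < i"
  shows "zee lam \<noteq> 0"
  unfolding zee_def using assms by (auto simp: prod_zero_iff)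

lemma sum_count_over:
  assumes "finite A" "set_mset M \<subseteq> A"
  shows "(\<Sum>k\<in>A. k * count M k) = sum_mset M"
  using assms(2)
proof (induction M)
  case empty then show ?case by simp
next
  case (add a M)
  have "(\<Sum>k\<in>A. k * count (add_mset a M) k) = (\<Sum>k\<in>A. k * count M k + (if k = a then a else 0))"
    by (rule sum.cong) auto
  also have "\<dots> = (\<Sum>k\<in>A. k * count M k) + a"
    using add.prems assms(1) by (simp add: sum.distrib)
  also have "\<dots> = sum_mset (add_mset a M)" using add by simp
  finally show ?case .
qed

lemma fact_prod_split:
  assumes "a \<le> b"
  shows "fact a * \<Prod>{a+1..b} = (fact b :: nat)"
  using fact_div_fact[OF assms] fact_dvd[OF assms, where 'a=nat]
  by (metis dvd_mult_div_cancel)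


lemma glue_unique:
  assumes "distinct L1" "distinct L2" "L1 \<noteq> []" "L2 \<noteq> []" "hd L1 = hd L2"
    "glue L1 \<tau>1 = glue L2 \<tau>2"
  shows "L1 = L2"
proof -
  have h1: "L1 ! 0 = hd L1" using assms(3) by (simp add: hd_conv_nth)
  have h2: "L2 ! 0 = hd L2" using assms(4) by (simp add: hd_conv_nth)
  have "set L1 = orb (glue L1 \<tau>1) (L1 ! 0)" using orb_glue_L[OF assms(1)] assms(3) by simp
  also have "\<dots> = orb (glue L2 \<tau>2) (L2 ! 0)" using assms(5,6) h1 h2 by simp
  also have "\<dots> = set L2" using orb_glue_L[OF assms(2)] assms(4) by simp
  finally have st: "set L1 = set L2" .
  have len: "length L1 = length L2"
    using st assms(1,2) by (metis distinct_card)
  show ?thesis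
  proof (rule nth_equalityI[OF len])
    fix i assume i: "i < length L1"
    have "L1 ! i = (glue L1 \<tau>1 ^^ i) (L1 ! 0)"
      using glue_pow_L[OF assms(1), where j=0 and \<tau>=\<tau>1 and i=i] i assms(3) by simp
    also have "\<dots> = (glue L2 \<tau>2 ^^ i) (L2 ! 0)" using assms(5,6) h1 h2 by simp
    also have "\<dots> = L2 ! i"
      using glue_pow_L[OF assms(2), where j=0 and \<tau>=\<tau>2 and i=i] i len assms(4) by simp
    finally show "L1 ! i = L2 ! i" .
  qed
qed

lemma glue_inj:
  assumes "\<tau>1 permutes T" "\<tau>2 permutes T" "set L \<inter> T = {}" "glue L \<tau>1 = glue L \<tau>2"
  shows "\<tau>1 = \<tau>2"
proof
  fix y show "\<tau>1 y = \<tau>2 y"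
  proof (cases "y \<in> set L")
    case True
    then have "y \<notin> T" using assms(3) by blast
    then show ?thesis using assms(1,2) by (simp add: permutes_not_in)
  next
    case False
    then show ?thesis using fun_cong[OF assms(4), of y] by (simp add: glue_def)
  qed
qed

lemma card_perms_type:
  assumes "finite S" "\<forall>i\<in>#mu. 0 < i" "sum_mset mu = card S"
  shows "of_nat (card {\<sigma>. \<sigma> permutes S \<and> ctS S \<sigma> = mu}) * zee mu = (fact (card S) :: rat)"
  using assms
proof (induction S arbitrary: mu rule: finite_psubset_induct)
  case (psubset S)
  show ?case
  proof (cases "S = {}")
    case True
    then have mu: "mu = {#}" using psubset.prems by (cases mu) auto
    have "{\<sigma>. \<sigma> permutes S \<and> ctS S \<sigma> = mu} = {id}"
      using True mu by (auto simp: ctS_empty)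
    then show ?thesis using True mu by (simp add: zee_def)
  next
    case False
    then obtain x where x: "x \<in> S" by blast
    define s where "s = card S"
    have s1: "1 \<le> s" using False psubset.hyps(1) by (simp add: s_def Suc_le_eq card_gt_0_iff)
    define Lk where "Lk k = (\<lambda>L'. x # L') ` {L'. length L' = k - 1 \<and> distinct L' \<and> set L' \<subseteq> S - {x}}" for k
    define B where "B L k = {\<tau>. \<tau> permutes (S - set L) \<and> ctS (S - set L) \<tau> = mu - {#k#}}" for L k
    define A where "A = {\<sigma>. \<sigma> permutes S \<and> ctS S \<sigma> = mu}"
    have Lk_props: "distinct L \<and> L \<noteq> [] \<and> hd L = x \<and> set L \<subseteq> S \<and> length L = k"
      if "L \<in> Lk k" "k \<in># mu" for L k
    proof -
      have "0 < k" using that(2) psubset.prems(1) by blast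
      then show ?thesis using that(1) x unfolding Lk_def by auto
    qed
    have Aeq: "A = (\<Union>k\<in>set_mset mu. \<Union>L\<in>Lk k. glue L ` B L k)"
    proof
      show "A \<subseteq> (\<Union>k\<in>set_mset mu. \<Union>L\<in>Lk k. glue L ` B L k)"
      proof
        fix \<sigma> assume "\<sigma> \<in> A"
        then have sp: "\<sigma> permutes S" and sct: "ctS S \<sigma> = mu" by (auto simp: A_def)
        obtain L where L: "distinct L" "L \<noteq> []" "hd L = x" "set L \<subseteq> S"
          "perm_restrict \<sigma> (S - set L) permutes (S - set L)"
          "\<sigma> = glue L (perm_restrict \<sigma> (S - set L))"
          using decompose[OF sp psubset.hyps(1) x] by blast
        define k where "k = length L"
        have ct: "ctS S \<sigma> = add_mset k (ctS (S - set L) (perm_restrict \<sigma> (S - set L)))"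
          unfolding k_def by (rule ctS_split[OF sp psubset.hyps(1) L(1,2,4,5,6)])
        have k: "k \<in># mu" using ct sct by auto
        have ct2: "ctS (S - set L) (perm_restrict \<sigma> (S - set L)) = mu - {#k#}"
          using ct sct by auto
        have LL: "L = x # tl L" using L(2,3) by (cases L) auto
        have "tl L \<in> {L'. length L' = k - 1 \<and> distinct L' \<and> set L' \<subseteq> S - {x}}"
          using L(1,4) LL k_def by (cases L) auto
        then have "x # tl L \<in> Lk k" unfolding Lk_def by (rule imageI)
        then have Lin: "L \<in> Lk k" using LL by simp
        have "perm_restrict \<sigma> (S - set L) \<in> B L k" using L(5) ct2 by (simp add: B_def)
        then have "glue L (perm_restrict \<sigma> (S - set L)) \<in> glue L ` B L k" by (rule imageI)
        then have "\<sigma> \<in> glue L ` B L k" using L(6) by simp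
        then show "\<sigma> \<in> (\<Union>k\<in>set_mset mu. \<Union>L\<in>Lk k. glue L ` B L k)"
          using k Lin by blast
      qed
    next
      show "(\<Union>k\<in>set_mset mu. \<Union>L\<in>Lk k. glue L ` B L k) \<subseteq> A"
      proof (clarify)
        fix k L \<tau> assume k: "k \<in># mu" and L: "L \<in> Lk k" and t: "\<tau> \<in> B L k"
        note P = Lk_props[OF L k]
        have tp: "\<tau> permutes (S - set L)" and tct: "ctS (S - set L) \<tau> = mu - {#k#}"
          using t by (auto simp: B_def)
        have "glue L \<tau> permutes (set L \<union> (S - set L))"
          by (rule glue_permutes) (use P tp in auto)
        moreover have "set L \<union> (S - set L) = S" using P by blast
        ultimately have gp: "glue L \<tau> permutes S" by simp
        have "ctS S (glue L \<tau>) = add_mset (length L) (ctS (S - set L) \<tau>)"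
          by (rule ctS_split[OF gp psubset.hyps(1)]) (use P tp in auto)
        then have "ctS S (glue L \<tau>) = mu" using tct P k by simp
        then show "glue L \<tau> \<in> A" using gp by (simp add: A_def)
      qed
    qed
    have finLk: "finite (Lk k)" for k
    proof -
      have "finite {L'. length L' = k - 1 \<and> distinct L' \<and> set L' \<subseteq> S - {x}}"
        by (rule finite_subset[OF _ finite_lists_length_eq[OF finite_Diff[OF psubset.hyps(1)], of "{x}" "k - 1"]]) auto
      then show ?thesis unfolding Lk_def by simp
    qed
    have finB: "finite (B L k)" for L k
      by (rule finite_subset[OF _ finite_permutations[OF finite_Diff[OF psubset.hyps(1)], of "set L"]])
        (auto simp: B_def)
    have cardA: "card A = (\<Sum>k\<in>set_mset mu. \<Sum>L\<in>Lk k. card (B L k))"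
    proof -
      have "card A = (\<Sum>k\<in>set_mset mu. card (\<Union>L\<in>Lk k. glue L ` B L k))"
        unfolding Aeq
      proof (rule card_UN_disjoint)
        show "finite (set_mset mu)" by simp
        show "\<forall>k\<in>set_mset mu. finite (\<Union>L\<in>Lk k. glue L ` B L k)"
          using finLk finB by blast
        show "\<forall>k\<in>set_mset mu. \<forall>k'\<in>set_mset mu. k \<noteq> k' \<longrightarrow>
           (\<Union>L\<in>Lk k. glue L ` B L k) \<inter> (\<Union>L\<in>Lk k'. glue L ` B L k') = {}"
        proof (intro ballI impI)
          fix k k' assume k: "k \<in># mu" and k': "k' \<in># mu" and ne: "k \<noteq> k'"
          show "(\<Union>L\<in>Lk k. glue L ` B L k) \<inter> (\<Union>L\<in>Lk k'. glue L ` B L k') = {}"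
          proof (rule ccontr)
            assume "(\<Union>L\<in>Lk k. glue L ` B L k) \<inter> (\<Union>L\<in>Lk k'. glue L ` B L k') \<noteq> {}"
            then obtain L L' t t' where L: "L \<in> Lk k" and L': "L' \<in> Lk k'"
              and eq: "glue L t = glue L' t'" by blast
            note P = Lk_props[OF L k] and P' = Lk_props[OF L' k']
            have "L = L'" by (rule glue_unique[OF _ _ _ _ _ eq]) (use P P' in auto)
            then show False using P P' ne by simp
          qed
        qed
      qed
      also have "\<dots> = (\<Sum>k\<in>set_mset mu. \<Sum>L\<in>Lk k. card (B L k))"
      proof (rule sum.cong[OF refl])
        fix k assume k: "k \<in> set_mset mu"
        have "card (\<Union>L\<in>Lk k. glue L ` B L k) = (\<Sum>L\<in>Lk k. card (glue L ` B L k))"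
        proof (rule card_UN_disjoint)
          show "finite (Lk k)" by (rule finLk)
          show "\<forall>L\<in>Lk k. finite (glue L ` B L k)" using finB by blast
          show "\<forall>L\<in>Lk k. \<forall>L'\<in>Lk k. L \<noteq> L' \<longrightarrow> glue L ` B L k \<inter> glue L' ` B L' k = {}"
          proof (intro ballI impI)
            fix L L' assume L: "L \<in> Lk k" and L': "L' \<in> Lk k" and ne: "L \<noteq> L'"
            note P = Lk_props[OF L] and P' = Lk_props[OF L']
            show "glue L ` B L k \<inter> glue L' ` B L' k = {}"
            proof (rule ccontr)
              assume "glue L ` B L k \<inter> glue L' ` B L' k \<noteq> {}"
              then obtain t t' where eq: "glue L t = glue L' t'" by blast
              have "L = L'" by (rule glue_unique[OF _ _ _ _ _ eq]) (use P P' k in auto)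
              then show False using ne by simp
            qed
          qed
        qed
        also have "\<dots> = (\<Sum>L\<in>Lk k. card (B L k))"
        proof (rule sum.cong[OF refl])
          fix L assume L: "L \<in> Lk k"
          note P = Lk_props[OF L] 
          have "inj_on (glue L) (B L k)"
          proof (rule inj_onI)
            fix t t' assume "t \<in> B L k" "t' \<in> B L k" "glue L t = glue L t'"
            then show "t = t'" by (intro glue_inj[of t "S - set L" t' L]) (auto simp: B_def)
          qed
          then show "card (glue L ` B L k) = card (B L k)" by (rule card_image)
        qed
        finally show "card (\<Union>L\<in>Lk k. glue L ` B L k) = (\<Sum>L\<in>Lk k. card (B L k))" .
      qed
      finally show ?thesis .
    qed
    have cardB: "of_nat (card (B L k)) = (fact (s - k) :: rat) / zee (mu - {#k#})"
      if L: "L \<in> Lk k" and k: "k \<in># mu" for L k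
    proof -
      note P = Lk_props[OF L k]
      have xL: "x \<in> set L" using P by (cases L) auto
      have "sum_mset mu = k + sum_mset (mu - {#k#})" by (rule sum_mset.remove[OF k])
      then have le: "k \<le> s" unfolding s_def using psubset.prems(2) by linarith
      have cD: "card (S - set L) = s - k"
        using P psubset.hyps(1) by (simp add: s_def card_Diff_subset distinct_card)
      have pos': "\<forall>i\<in>#mu - {#k#}. 0 < i" using psubset.prems(1) by (meson in_diffD)
      have "sum_mset mu = k + sum_mset (mu - {#k#})" by (rule sum_mset.remove[OF k])
      then have sum': "sum_mset (mu - {#k#}) = card (S - set L)"
        using psubset.prems(2) cD unfolding s_def by linarith
      have IH: "of_nat (card {\<sigma>. \<sigma> permutes (S - set L) \<and> ctS (S - set L) \<sigma> = mu - {#k#}}) *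
          zee (mu - {#k#}) = (fact (card (S - set L)) :: rat)"
        by (rule psubset.IH) (use xL x pos' sum' in auto)
      have nz: "zee (mu - {#k#}) \<noteq> 0" by (rule zee_nonzero[OF pos'])
      show ?thesis using IH nz cD by (simp add: B_def field_simps)
    qed
    have cardLk: "of_nat (card (Lk k)) * (fact (s - k) :: rat) = fact (s - 1)"
      if k: "k \<in># mu" for k
    proof -
      have k0: "0 < k" using k psubset.prems(1) by blast
      have "sum_mset mu = k + sum_mset (mu - {#k#})" by (rule sum_mset.remove[OF k])
      then have le: "k \<le> s" unfolding s_def using psubset.prems(2) by linarith
      have cx: "card (S - {x}) = s - 1" using x psubset.hyps(1) by (simp add: s_def)
      have "card (Lk k) = card {L'. length L' = k - 1 \<and> distinct L' \<and> set L' \<subseteq> S - {x}}"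
        unfolding Lk_def by (rule card_image) simp
      also have "\<dots> = \<Prod>{card (S - {x}) - (k - 1) + 1 .. card (S - {x})}"
        by (rule card_lists_distinct_length_eq) (use psubset.hyps(1) cx le k0 in auto)
      also have "\<dots> = \<Prod>{(s - k) + 1 .. s - 1}" using cx le k0 by (simp add: Suc_diff_le)
      finally have "card (Lk k) = \<Prod>{(s - k) + 1 .. s - 1}" .
      then have "fact (s - k) * card (Lk k) = fact (s - 1)"
        using fact_prod_split[of "s - k" "s - 1"] le k0 by simp
      then have "(of_nat (fact (s - k) * card (Lk k)) :: rat) = of_nat (fact (s - 1))"
        by (simp only:)
      then have "(fact (s - k) :: rat) * of_nat (card (Lk k)) = fact (s - 1)"
        by (simp only: of_nat_mult of_nat_fact)
      then show ?thesis by (simp add: mult.commute)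
    qed
    have nz: "zee mu \<noteq> 0" by (rule zee_nonzero[OF psubset.prems(1)])
    have "(of_nat (card A) :: rat) = (\<Sum>k\<in>set_mset mu. \<Sum>L\<in>Lk k. of_nat (card (B L k)))"
      unfolding cardA by simp
    also have "\<dots> = (\<Sum>k\<in>set_mset mu. of_nat (card (Lk k)) * (fact (s - k) / zee (mu - {#k#})))"
      by (rule sum.cong[OF refl]) (simp add: cardB)
    also have "\<dots> = (\<Sum>k\<in>set_mset mu. fact (s - 1) * of_nat (k * count mu k) / zee mu)"
    proof (rule sum.cong[OF refl])
      fix k assume k: "k \<in> set_mset mu"
      have z: "zee mu = zee (mu - {#k#}) * of_nat (k * count mu k)" by (rule zee_remove) (use k in simp)
      have nz': "zee (mu - {#k#}) \<noteq> 0" using nz z by auto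
      have "of_nat (card (Lk k)) * (fact (s - k) / zee (mu - {#k#})) = fact (s - 1) / zee (mu - {#k#})"
        using cardLk[of k] k by (simp add: field_simps)
      also have "\<dots> = fact (s - 1) * of_nat (k * count mu k) / zee mu"
        using z nz nz' by (simp add: field_simps)
      finally show "of_nat (card (Lk k)) * (fact (s - k) / zee (mu - {#k#})) =
          fact (s - 1) * of_nat (k * count mu k) / zee mu" .
    qed
    also have "\<dots> = fact (s - 1) * of_nat (\<Sum>k\<in>set_mset mu. k * count mu k) / zee mu"
      by (simp add: sum_divide_distrib[symmetric] sum_distrib_left[symmetric])
    also have "\<dots> = fact (s - 1) * of_nat s / zee mu"
      using sum_count_over[of "set_mset mu" mu] psubset.prems(2) by (simp add: s_def)
    also have "\<dots> = fact s / zee mu"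
      using s1 fact_reduce[of s, where 'a=rat] by (simp add: mult.commute)
    finally show ?thesis using nz by (simp add: A_def s_def field_simps)
  qed
qed



lemma sorted_count_iff:
  fixes s :: "nat list"
  assumes "sorted s" "i < length s"
  shows "s ! i \<le> v \<longleftrightarrow> Suc i \<le> card {t. t < length s \<and> s ! t \<le> v}"
proof
  assume h: "s ! i \<le> v"
  have "{..i} \<subseteq> {t. t < length s \<and> s ! t \<le> v}"
  proof
    fix t assume "t \<in> {..i}"
    then have "t \<le> i" by simp
    then have "s ! t \<le> s ! i" using assms by (simp add: sorted_nth_mono)
    then show "t \<in> {t. t < length s \<and> s ! t \<le> v}" using h \<open>t \<le> i\<close> assms(2) by simp
  qed
  then have "card {..i} \<le> card {t. t < length s \<and> s ! t \<le> v}" by (rule card_mono[rotated]) simp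
  then show "Suc i \<le> card {t. t < length s \<and> s ! t \<le> v}" by simp
next
  assume h: "Suc i \<le> card {t. t < length s \<and> s ! t \<le> v}"
  show "s ! i \<le> v"
  proof (rule ccontr)
    assume "\<not> s ! i \<le> v"
    have "{t. t < length s \<and> s ! t \<le> v} \<subseteq> {..<i}"
    proof
      fix t assume t: "t \<in> {t. t < length s \<and> s ! t \<le> v}"
      show "t \<in> {..<i}"
      proof (rule ccontr)
        assume "t \<notin> {..<i}"
        then have "i \<le> t" by simp
        then have "s ! i \<le> s ! t" using assms(1) t by (simp add: sorted_nth_mono)
        then show False using t \<open>\<not> s ! i \<le> v\<close> by simp
      qed
    qed
    then have "card {t. t < length s \<and> s ! t \<le> v} \<le> card {..<i}" by (rule card_mono[rotated]) simp
    then show False using h by simp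
  qed
qed

lemma count_le_sort:
  "card {t. t < length (sort a) \<and> sort a ! t \<le> (v::nat)} = card {t. t < length a \<and> a ! t \<le> v}"
proof -
  have "card {t. t < length (sort a) \<and> sort a ! t \<le> v} = length (filter (\<lambda>u. u \<le> v) (sort a))"
    by (simp add: length_filter_conv_card)
  also have "\<dots> = size (filter_mset (\<lambda>u. u \<le> v) (mset (sort a)))"
    by (metis mset_filter size_mset)
  also have "\<dots> = size (filter_mset (\<lambda>u. u \<le> v) (mset a))" by simp
  also have "\<dots> = length (filter (\<lambda>u. u \<le> v) a)" by (metis mset_filter size_mset)
  also have "\<dots> = card {t. t < length a \<and> a ! t \<le> v}" by (simp add: length_filter_conv_card)
  finally show ?thesis .
qed

lemma parking_count:
  assumes "length a = n"
  shows "parking_function a \<longleftrightarrow>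
    (\<forall>v\<in>set a. 1 \<le> v) \<and> (\<forall>j. 1 \<le> j \<and> j \<le> n \<longrightarrow> j \<le> card {i. i < n \<and> a ! i \<le> j})"
proof -
  let ?s = "sort a"
  have ls: "length ?s = n" using assms by simp
  have so: "sorted ?s" by simp
  have cnt: "\<And>v. card {t. t < n \<and> ?s ! t \<le> v} = card {i. i < n \<and> a ! i \<le> v}"
    using count_le_sort[of a] assms by simp
  have p1: "(\<forall>i<n. 1 \<le> ?s ! i) \<longleftrightarrow> (\<forall>v\<in>set a. 1 \<le> v)"
  proof -
    have e1: "(\<forall>v\<in>set ?s. 1 \<le> v) = (\<forall>i<length ?s. 1 \<le> ?s!i)" by (rule all_set_conv_all_nth)
    have e2: "set ?s = set a" by simp
    show ?thesis using e1 e2 ls by metis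
  qed
  have p2: "(\<forall>i<n. ?s ! i \<le> i + 1) \<longleftrightarrow> (\<forall>j. 1 \<le> j \<and> j \<le> n \<longrightarrow> j \<le> card {i. i < n \<and> a ! i \<le> j})"
  proof
    assume h: "\<forall>i<n. ?s ! i \<le> i + 1"
    show "\<forall>j. 1 \<le> j \<and> j \<le> n \<longrightarrow> j \<le> card {i. i < n \<and> a ! i \<le> j}"
    proof (intro allI impI)
      fix j assume j: "1 \<le> j \<and> j \<le> n"
      then have "j - 1 < length ?s" using ls by auto
      moreover have "?s ! (j - 1) \<le> j - 1 + 1" using h[rule_format, of "j - 1"] j by auto
      then have "?s ! (j - 1) \<le> j" using j by simp
      ultimately have "Suc (j - 1) \<le> card {t. t < length ?s \<and> ?s ! t \<le> j}"
        using sorted_count_iff[OF so] by blast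
      then show "j \<le> card {i. i < n \<and> a ! i \<le> j}" using cnt ls j by simp
    qed
  next
    assume h: "\<forall>j. 1 \<le> j \<and> j \<le> n \<longrightarrow> j \<le> card {i. i < n \<and> a ! i \<le> j}"
    show "\<forall>i<n. ?s ! i \<le> i + 1"
    proof (intro allI impI)
      fix i assume i: "i < n"
      have "Suc i \<le> card {t. t < length ?s \<and> ?s ! t \<le> Suc i}"
        using h[rule_format, of "Suc i"] i cnt ls by simp
      then show "?s ! i \<le> i + 1" using sorted_count_iff[OF so, of i "Suc i"] i ls by simp
    qed
  qed
  show ?thesis unfolding parking_function_def using ls p1 p2 by auto
qed


lemma cycle_abstract:
  fixes D :: "nat \<Rightarrow> int"
  assumes m: "0 < m" and per: "\<forall>t\<le>m. D (t + m) = D t - 1"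
  shows "\<exists>!r. r < m \<and> (\<forall>j. 1 \<le> j \<and> j < m \<longrightarrow> D r \<le> D (r + j))"
proof -
  define M where "M = Min (D ` {..<m})"
  have fin: "finite (D ` {..<m})" and ne: "D ` {..<m} \<noteq> {}" using m by auto
  have Mle: "\<And>t. t < m \<Longrightarrow> M \<le> D t" unfolding M_def using fin by simp
  obtain r0 where r0: "r0 < m" "D r0 = M" using Min_in[OF fin ne] unfolding M_def by auto
  define P where "P r \<longleftrightarrow> r < m \<and> D r = M" for r
  have Pr0: "P r0" using r0 by (simp add: P_def)
  define r where "r = (LEAST r. P r)"
  have Pr: "P r" unfolding r_def by (rule LeastI[of P r0, OF Pr0])
  have rlt: "r < m" and rM: "D r = M" using Pr by (auto simp: P_def)
  have before: "\<And>t. t < r \<Longrightarrow> D r < D t"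
  proof -
    fix t assume t: "t < r"
    then have "\<not> P t" unfolding r_def by (rule not_less_Least)
    then have "D t \<noteq> M" using t rlt by (simp add: P_def)
    moreover have "M \<le> D t" using t rlt Mle by simp
    ultimately show "D r < D t" using rM by simp
  qed
  have good: "\<forall>j. 1 \<le> j \<and> j < m \<longrightarrow> D r \<le> D (r + j)"
  proof (intro allI impI)
    fix j assume j: "1 \<le> j \<and> j < m"
    show "D r \<le> D (r + j)"
    proof (cases "r + j < m")
      case True then show ?thesis using Mle rM by simp
    next
      case False
      define t where "t = r + j - m"
      have t: "t < r" "t \<le> m" "r + j = t + m" using False j rlt by (auto simp: t_def)
      have "D (r + j) = D t - 1" using per t by simp
      then show ?thesis using before[OF t(1)] by simp
    qed
  qed
  show ?thesis
  proof (rule ex1I[of _ r])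
    show "r < m \<and> (\<forall>j. 1 \<le> j \<and> j < m \<longrightarrow> D r \<le> D (r + j))" using rlt good by simp
  next
    fix r' assume r': "r' < m \<and> (\<forall>j. 1 \<le> j \<and> j < m \<longrightarrow> D r' \<le> D (r' + j))"
    have uniq: False if a: "a < b" "b < m" "\<forall>j. 1 \<le> j \<and> j < m \<longrightarrow> D a \<le> D (a + j)"
        "\<forall>j. 1 \<le> j \<and> j < m \<longrightarrow> D b \<le> D (b + j)" for a b
    proof -
      have "1 \<le> b - a \<and> b - a < m" using a(1,2) by linarith
      then have "D a \<le> D (a + (b - a))" using a(3) by blast
      then have 1: "D a \<le> D b" using a(1) by simp
      have "1 \<le> a + m - b \<and> a + m - b < m" using a(1,2) by linarith
      then have "D b \<le> D (b + (a + m - b))" using a(4) by blast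
      then have "D b \<le> D (a + m)" using a(1,2) by simp
      also have "D (a + m) = D a - 1" using per a(1,2) by simp
      finally show False using 1 by simp
    qed
    show "r' = r"
    proof (rule ccontr)
      assume "r' \<noteq> r"
      then consider "r' < r" | "r < r'" by linarith
      then show False
      proof cases
        case 1 then show False using uniq[of r' r] r' rlt good by blast
      next
        case 2 then show False using uniq[of r r'] r' rlt good by blast
      qed
    qed
  qed
qed

lemma mod_lt_2m:
  fixes a m :: nat
  assumes "a < 2 * m"
  shows "a mod m = (if a < m then a else a - m)"
proof (cases "a < m")
  case True then show ?thesis by simp
next
  case False
  then have "a mod m = (a - m) mod m" by (simp add: le_mod_geq)
  also have "\<dots> = a - m" using assms False by simp
  finally show ?thesis using False by simp
qed

lemma window:
  fixes y :: "nat \<Rightarrow> nat"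
  assumes y: "\<forall>i<n. y i < m" and r: "r < m" and j: "j \<le> m"
  shows "card {i. i < n \<and> (y i + (m - r) mod m) mod m < j} =
    card {i. i < n \<and> y i < r + j} - card {i. i < n \<and> y i < r} + card {i. i < n \<and> y i < r + j - m}"
proof -
  have eq: "(y i + (m - r) mod m) mod m = (if r \<le> y i then y i - r else y i + m - r)" if i: "i < n" for i
  proof (cases "r = 0")
    case True then show ?thesis using y i by simp
  next
    case False
    then have "(m - r) mod m = m - r" using r by simp
    then have "(y i + (m - r) mod m) mod m = (y i + (m - r)) mod m" by simp
    also have "\<dots> = (if y i + (m - r) < m then y i + (m - r) else y i + (m - r) - m)"
      by (rule mod_lt_2m) (use y i r in auto)
    also have "\<dots> = (if r \<le> y i then y i - r else y i + m - r)" using r by auto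
    finally show ?thesis .
  qed
  have setq: "{i. i < n \<and> (y i + (m - r) mod m) mod m < j} =
      ({i. i < n \<and> y i < r + j} - {i. i < n \<and> y i < r}) \<union> {i. i < n \<and> y i < r + j - m}"
  proof (intro set_eqI iffI)
    fix i assume "i \<in> {i. i < n \<and> (y i + (m - r) mod m) mod m < j}"
    then have i: "i < n" and c: "(y i + (m - r) mod m) mod m < j" by auto
    show "i \<in> ({i. i < n \<and> y i < r + j} - {i. i < n \<and> y i < r}) \<union> {i. i < n \<and> y i < r + j - m}"
      using c eq[OF i] i r by (auto split: if_splits)
  next
    fix i assume h: "i \<in> ({i. i < n \<and> y i < r + j} - {i. i < n \<and> y i < r}) \<union> {i. i < n \<and> y i < r + j - m}"
    then have i: "i < n" by auto
    show "i \<in> {i. i < n \<and> (y i + (m - r) mod m) mod m < j}"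
      using h eq[OF i] i r j by (auto split: if_splits)
  qed
  have disj: "({i. i < n \<and> y i < r + j} - {i. i < n \<and> y i < r}) \<inter> {i. i < n \<and> y i < r + j - m} = {}"
    using j by auto
  have "card {i. i < n \<and> (y i + (m - r) mod m) mod m < j} =
      card ({i. i < n \<and> y i < r + j} - {i. i < n \<and> y i < r}) + card {i. i < n \<and> y i < r + j - m}"
    unfolding setq by (rule card_Un_disjoint) (use disj in auto)
  also have "card ({i. i < n \<and> y i < r + j} - {i. i < n \<and> y i < r}) =
      card {i. i < n \<and> y i < r + j} - card {i. i < n \<and> y i < r}"
    by (rule card_Diff_subset) auto
  finally show ?thesis .
qed


definition sh :: "nat \<Rightarrow> nat \<Rightarrow> nat list \<Rightarrow> nat list" where
  "sh m s x = map (\<lambda>v. (v - 1 + s) mod m + 1) x"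

lemma ex1_transfer:
  assumes "\<exists>!r. r < m \<and> Q r" "0 < (m::nat)"
  shows "\<exists>!s. s < m \<and> Q ((m - s) mod m)"
proof -
  have inv: "(m - (m - s) mod m) mod m = s" if "s < m" for s
    using that by (cases "s = 0") auto
  obtain r where r: "r < m" "Q r" and u: "\<And>r'. r' < m \<and> Q r' \<Longrightarrow> r' = r" using assms(1) by blast
  show ?thesis
  proof (rule ex1I[of _ "(m - r) mod m"])
    show "(m - r) mod m < m \<and> Q ((m - (m - r) mod m) mod m)" using inv[OF r(1)] r assms(2) by simp
  next
    fix s assume s: "s < m \<and> Q ((m - s) mod m)"
    then have "(m - s) mod m = r" using u assms(2) by simp
    then show "s = (m - r) mod m" using inv s by metis
  qed
qed

lemma cycle_lemma:
  assumes len: "length x = n" and vals: "set x \<subseteq> {1..n+1}"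
  shows "\<exists>!s. s < n + 1 \<and> parking_function (sh (n + 1) s x)"
proof -
  define m where "m = n + 1"
  define y where "y i = x ! i - 1" for i
  have y: "\<forall>i<n. y i < m"
  proof (intro allI impI)
    fix i assume i: "i < n"
    have "x ! i \<in> set x" using i len by simp
    then have "x ! i \<in> {1..n+1}" using vals by blast
    then show "y i < m" by (auto simp: y_def m_def)
  qed
  define F where "F t = card {i. i < n \<and> y i < t}" for t
  define D where "D t = int (F t) + int (F (t - m)) - int t" for t
  have F0: "F 0 = 0" by (simp add: F_def)
  have Fbig: "F t = n" if "m \<le> t" for t
  proof -
    have "{i. i < n \<and> y i < t} = {..<n}" using y that by force
    then show ?thesis by (simp add: F_def)
  qed
  have per: "\<forall>t\<le>m. D (t + m) = D t - 1"
  proof (intro allI impI)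
    fix t assume t: "t \<le> m"
    have "D (t + m) = int n + int (F t) - int (t + m)" using Fbig[of "t + m"] by (simp add: D_def)
    moreover have "D t = int (F t) - int t" using t F0 by (simp add: D_def)
    ultimately show "D (t + m) = D t - 1" by (simp add: m_def)
  qed
  have m0: "0 < m" by (simp add: m_def)
  have ex: "\<exists>!r. r < m \<and> (\<forall>j. 1 \<le> j \<and> j < m \<longrightarrow> D r \<le> D (r + j))"
    by (rule cycle_abstract[OF m0 per])
  have key: "parking_function (sh m s x) \<longleftrightarrow> (\<forall>j. 1 \<le> j \<and> j < m \<longrightarrow> D ((m - s) mod m) \<le> D ((m - s) mod m + j))"
    if s: "s < m" for s
  proof -
    define r where "r = (m - s) mod m"
    have r: "r < m" using m0 by (simp add: r_def)
    have sr: "(m - r) mod m = s" using s by (cases "s = 0") (auto simp: r_def)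
    have lsh: "length (sh m s x) = n" using len by (simp add: sh_def)
    have vs: "\<forall>v\<in>set (sh m s x). 1 \<le> v" by (auto simp: sh_def)
    have nth: "(sh m s x) ! i \<le> j \<longleftrightarrow> (y i + (m - r) mod m) mod m < j" if "i < n" for i j
      using that len by (simp add: sh_def y_def sr Suc_le_eq)
    have cnt: "card {i. i < n \<and> (sh m s x) ! i \<le> j} = card {i. i < n \<and> (y i + (m - r) mod m) mod m < j}" for j
    proof -
      have "{i. i < n \<and> (sh m s x) ! i \<le> j} = {i. i < n \<and> (y i + (m - r) mod m) mod m < j}"
        using nth by blast
      then show ?thesis by simp
    qed
    have win: "int (card {i. i < n \<and> (sh m s x) ! i \<le> j}) - int j = D (r + j) - D r" if j: "1 \<le> j \<and> j < m" for j
    proof -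
      have sub: "F r \<le> F (r + j)" unfolding F_def by (rule card_mono) auto
      have "card {i. i < n \<and> (sh m s x) ! i \<le> j} = F (r + j) - F r + F (r + j - m)"
        unfolding cnt F_def by (rule window[OF y r]) (use j in simp)
      then show ?thesis using sub F0 r by (simp add: D_def)
    qed
    have "parking_function (sh m s x) \<longleftrightarrow> (\<forall>j. 1 \<le> j \<and> j \<le> n \<longrightarrow> j \<le> card {i. i < n \<and> (sh m s x) ! i \<le> j})"
      using parking_count[OF lsh] vs by simp
    also have "\<dots> \<longleftrightarrow> (\<forall>j. 1 \<le> j \<and> j < m \<longrightarrow> D r \<le> D (r + j))"
    proof -
      have "(j \<le> card {i. i < n \<and> (sh m s x) ! i \<le> j}) \<longleftrightarrow> D r \<le> D (r + j)" if "1 \<le> j \<and> j < m" for j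
        using win[OF that] by linarith
      note w = this
      show ?thesis
      proof (intro iffI allI impI)
        fix j assume h: "\<forall>j. 1 \<le> j \<and> j \<le> n \<longrightarrow> j \<le> card {i. i < n \<and> sh m s x ! i \<le> j}"
          and j: "1 \<le> j \<and> j < m"
        have "1 \<le> j \<and> j \<le> n" using j by (simp add: m_def)
        then have "j \<le> card {i. i < n \<and> sh m s x ! i \<le> j}" using h by blast
        then show "D r \<le> D (r + j)" using w[OF j] by blast
      next
        fix j assume h: "\<forall>j. 1 \<le> j \<and> j < m \<longrightarrow> D r \<le> D (r + j)"
          and j: "1 \<le> j \<and> j \<le> n"
        have j': "1 \<le> j \<and> j < m" using j by (simp add: m_def)
        then have "D r \<le> D (r + j)" using h by blast
        then show "j \<le> card {i. i < n \<and> sh m s x ! i \<le> j}" using w[OF j'] by blast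
      qed
    qed
    finally show ?thesis by (simp add: r_def)
  qed
  have "\<exists>!s. s < m \<and> (\<forall>j. 1 \<le> j \<and> j < m \<longrightarrow> D ((m - s) mod m) \<le> D ((m - s) mod m + j))"
    by (rule ex1_transfer[OF ex m0])
  moreover have "(\<lambda>s. s < m \<and> parking_function (sh m s x)) =
      (\<lambda>s. s < m \<and> (\<forall>j. 1 \<le> j \<and> j < m \<longrightarrow> D ((m - s) mod m) \<le> D ((m - s) mod m + j)))"
    using key by (intro ext) blast
  ultimately have "\<exists>!s. s < m \<and> parking_function (sh m s x)" by simp
  then show ?thesis by (simp add: m_def)
qed


lemma orb_eq_orbit:
  assumes "\<sigma> permutes S" "finite S"
  shows "orb \<sigma> y = orbit \<sigma> y"
proof -
  have "permutation \<sigma>" using assms permutation_permutes by blast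
  then show ?thesis unfolding orb_def by (simp add: orbit_altdef_permutation)
qed

lemma orb_step:
  assumes "\<sigma> permutes S" "finite S"
  shows "orb \<sigma> (\<sigma> y) = orb \<sigma> y"
proof -
  have "permutation \<sigma>" using assms permutation_permutes by blast
  then show ?thesis using orb_eq_orbit[OF assms] by (simp add: permutation_orbit_step)
qed

lemma perm_lt: "\<sigma> permutes {..<n} \<Longrightarrow> i < n \<Longrightarrow> \<sigma> i < n"
  using permutes_in_image[of \<sigma> "{..<n}" i] by simp

lemma inv_perm_lt: "\<sigma> permutes {..<n} \<Longrightarrow> i < n \<Longrightarrow> inv \<sigma> i < n"
  using perm_lt[OF permutes_inv] by blast

lemma length_perm_act [simp]: "length (perm_act \<sigma> a) = length a"
  by (simp add: perm_act_def)

lemma nth_perm_act: "i < length a \<Longrightarrow> perm_act \<sigma> a ! i = a ! (inv \<sigma> i)"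
  by (simp add: perm_act_def)

lemma perm_act_map:
  assumes "\<sigma> permutes {..<length a}"
  shows "perm_act \<sigma> (map h a) = map h (perm_act \<sigma> a)"
proof (rule nth_equalityI)
  show "length (perm_act \<sigma> (map h a)) = length (map h (perm_act \<sigma> a))" by simp
next
  fix i assume i: "i < length (perm_act \<sigma> (map h a))"
  then have i': "i < length a" by simp
  have "inv \<sigma> i < length a" using inv_perm_lt[OF assms i'] .
  then show "perm_act \<sigma> (map h a) ! i = map h (perm_act \<sigma> a) ! i"
    using i' by (simp add: nth_perm_act)
qed

lemma fixed_iter:
  assumes "\<sigma> permutes {..<n}" "length a = n" "perm_act \<sigma> a = a" "i < n"
  shows "a ! ((\<sigma> ^^ k) i) = a ! i"
proof (induction k)
  case 0 then show ?case by simp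
next
  case (Suc k)
  define j where "j = (\<sigma> ^^ k) i"
  have j: "j < n" unfolding j_def using permutes_funpow_in[OF assms(1), of i k] assms(4) by simp
  have sj: "\<sigma> j < n" using perm_lt[OF assms(1) j] .
  have "a ! (\<sigma> j) = perm_act \<sigma> a ! (\<sigma> j)" using assms(3) by simp
  also have "\<dots> = a ! (inv \<sigma> (\<sigma> j))" using sj assms(2) by (simp add: nth_perm_act)
  also have "\<dots> = a ! j" using assms(1) by (simp add: permutes_inverses)
  finally show ?case using Suc by (simp add: j_def)
qed

definition FFix :: "nat \<Rightarrow> (nat \<Rightarrow> nat) \<Rightarrow> nat list set" where
  "FFix n \<sigma> = {a. length a = n \<and> set a \<subseteq> {1..n+1} \<and> perm_act \<sigma> a = a}"

lemma card_FFix: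
  assumes sp: "\<sigma> permutes {..<n}"
  shows "card (FFix n \<sigma>) = (n + 1) ^ card (orb \<sigma> ` {..<n})"
proof -
  define Orbs where "Orbs = orb \<sigma> ` {..<n}"
  define \<Psi> where "\<Psi> f = map (\<lambda>i. f (orb \<sigma> i)) [0..<n]" for f :: "nat set \<Rightarrow> nat"
  have finO: "finite Orbs" by (simp add: Orbs_def)
  have orbinv: "orb \<sigma> (inv \<sigma> i) = orb \<sigma> i" for i
  proof -
    have "orb \<sigma> (\<sigma> (inv \<sigma> i)) = orb \<sigma> (inv \<sigma> i)" by (rule orb_step[OF sp]) simp
    then show ?thesis using sp by (simp add: permutes_inverses)
  qed
  have "bij_betw \<Psi> (PiE Orbs (\<lambda>_. {1..n+1})) (FFix n \<sigma>)"
  proof (rule bij_betwI')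
    fix f g assume f: "f \<in> PiE Orbs (\<lambda>_. {1..n+1})" and g: "g \<in> PiE Orbs (\<lambda>_. {1..n+1})"
    show "(\<Psi> f = \<Psi> g) = (f = g)"
    proof
      assume e: "\<Psi> f = \<Psi> g"
      have "\<forall>c\<in>Orbs. f c = g c"
      proof
        fix c assume "c \<in> Orbs"
        then obtain i where i: "i < n" "c = orb \<sigma> i" by (auto simp: Orbs_def)
        have "\<Psi> f ! i = \<Psi> g ! i" using e by simp
        then show "f c = g c" using i by (simp add: \<Psi>_def)
      qed
      then show "f = g" using f g by (intro PiE_ext) auto
    qed simp
  next
    fix f assume f: "f \<in> PiE Orbs (\<lambda>_. {1..n+1})"
    have len: "length (\<Psi> f) = n" by (simp add: \<Psi>_def)
    have vals: "set (\<Psi> f) \<subseteq> {1..n+1}"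
    proof
      fix v assume "v \<in> set (\<Psi> f)"
      then obtain i where "i < n" "v = f (orb \<sigma> i)" by (auto simp: \<Psi>_def)
      then show "v \<in> {1..n+1}" using f by (auto simp: Orbs_def PiE_def Pi_def)
    qed
    have fixd: "perm_act \<sigma> (\<Psi> f) = \<Psi> f"
    proof (rule nth_equalityI)
      show "length (perm_act \<sigma> (\<Psi> f)) = length (\<Psi> f)" by simp
    next
      fix i assume "i < length (perm_act \<sigma> (\<Psi> f))"
      then have i: "i < n" by (simp add: len)
      have ii: "inv \<sigma> i < n" using inv_perm_lt[OF sp i] .
      show "perm_act \<sigma> (\<Psi> f) ! i = \<Psi> f ! i"
        using i ii len by (simp add: nth_perm_act \<Psi>_def orbinv)
    qed
    show "\<Psi> f \<in> FFix n \<sigma>" using len vals fixd by (simp add: FFix_def)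
  next
    fix a assume a: "a \<in> FFix n \<sigma>"
    then have len: "length a = n" and vals: "set a \<subseteq> {1..n+1}" and fx: "perm_act \<sigma> a = a"
      by (auto simp: FFix_def)
    define pick where "pick c = (SOME i. i < n \<and> orb \<sigma> i = c)" for c
    define f where "f = restrict (\<lambda>c. a ! pick c) Orbs"
    have pick: "pick (orb \<sigma> i) < n \<and> orb \<sigma> (pick (orb \<sigma> i)) = orb \<sigma> i" if "i < n" for i
      unfolding pick_def by (rule someI[of _ i]) (use that in simp)
    have same: "a ! pick (orb \<sigma> i) = a ! i" if i: "i < n" for i
    proof -
      define j where "j = pick (orb \<sigma> i)"
      have j: "j < n" "orb \<sigma> j = orb \<sigma> i" using pick[OF i] by (auto simp: j_def)
      have "i \<in> orb \<sigma> j" using j(2) self_in_orb[of i \<sigma>] by simp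
      then obtain k where "i = (\<sigma> ^^ k) j" by (auto simp: orb_def)
      then have "a ! i = a ! j" using fixed_iter[OF sp len fx j(1)] by simp
      then show ?thesis by (simp add: j_def)
    qed
    have fP: "f \<in> PiE Orbs (\<lambda>_. {1..n+1})"
    proof -
      have "a ! pick c \<in> {1..n+1}" if "c \<in> Orbs" for c
      proof -
        obtain i where i: "i < n" "c = orb \<sigma> i" using \<open>c \<in> Orbs\<close> by (auto simp: Orbs_def)
        have "pick c < n" using pick[OF i(1)] i(2) by simp
        then have "a ! pick c \<in> set a" using len by simp
        then show ?thesis using vals by blast
      qed
      then show ?thesis by (auto simp: f_def)
    qed
    have "\<Psi> f = a"
    proof (rule nth_equalityI)
      show "length (\<Psi> f) = length a" using len by (simp add: \<Psi>_def)
    next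
      fix i assume "i < length (\<Psi> f)"
      then have i: "i < n" by (simp add: \<Psi>_def)
      have "orb \<sigma> i \<in> Orbs" using i by (simp add: Orbs_def)
      then show "\<Psi> f ! i = a ! i" using i same[OF i] by (simp add: \<Psi>_def f_def)
    qed
    then show "\<exists>f\<in>PiE Orbs (\<lambda>_. {1..n+1}). a = \<Psi> f" using fP by blast
  qed
  then have "card (FFix n \<sigma>) = card (PiE Orbs (\<lambda>_. {1..n+1}))" by (simp add: bij_betw_same_card)
  also have "\<dots> = (n + 1) ^ card Orbs" using finO by (simp add: card_PiE)
  finally show ?thesis by (simp add: Orbs_def)
qed


lemma sh_vals: "0 < m \<Longrightarrow> set (sh m s a) \<subseteq> {1..m}"
  by (auto simp: sh_def Suc_le_eq)

lemma length_sh [simp]: "length (sh m s a) = length a"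
  by (simp add: sh_def)

lemma sh_0: "set a \<subseteq> {1..m} \<Longrightarrow> sh m 0 a = a"
proof -
  assume h: "set a \<subseteq> {1..m}"
  have "\<forall>v\<in>set a. (v - 1) mod m + 1 = v"
  proof
    fix v assume "v \<in> set a"
    then have "1 \<le> v" "v \<le> m" using h by auto
    then show "(v - 1) mod m + 1 = v" by simp
  qed
  then show ?thesis unfolding sh_def by (simp add: map_idI)
qed

lemma sh_sh: "sh m t (sh m s a) = sh m ((s + t) mod m) a"
proof -
  have "((v - 1 + s) mod m + 1 - 1 + t) mod m + 1 = (v - 1 + (s + t) mod m) mod m + 1" for v
  proof -
    have "((v - 1 + s) mod m + 1 - 1 + t) mod m = ((v - 1 + s) mod m + t) mod m" by simp
    also have "\<dots> = (v - 1 + s + t) mod m" by (simp add: mod_add_left_eq)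
    also have "\<dots> = (v - 1 + (s + t) mod m) mod m" by (simp add: mod_add_right_eq add.assoc)
    finally show ?thesis by simp
  qed
  then show ?thesis by (simp add: sh_def)
qed

lemma add_neg_mod: "s < (m::nat) \<Longrightarrow> (s + (m - s) mod m) mod m = 0"
  by (cases "s = 0") auto

lemma neg_mod_zero: "s < (m::nat) \<Longrightarrow> s' < m \<Longrightarrow> (s + (m - s') mod m) mod m = 0 \<Longrightarrow> s = s'"
proof (cases "s' = 0")
  case True
  then show "s < m \<Longrightarrow> s' < m \<Longrightarrow> (s + (m - s') mod m) mod m = 0 \<Longrightarrow> s = s'" by simp
next
  case False
  assume a: "s < m" "s' < m" "(s + (m - s') mod m) mod m = 0"
  have "(m - s') mod m = m - s'" using False a(2) by simp
  then have e: "(s + (m - s')) mod m = 0" using a(3) by simp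
  have "(s + (m - s')) mod m = (if s + (m - s') < m then s + (m - s') else s + (m - s') - m)"
    by (rule mod_lt_2m) (use a in auto)
  then show "s = s'" using e False a by (auto split: if_splits)
qed

lemma parking_vals:
  assumes "length a = n" "parking_function a"
  shows "set a \<subseteq> {1..n+1}"
proof
  fix v assume "v \<in> set a"
  then have "v \<in> set (sort a)" by simp
  then obtain i where i0: "i < length (sort a)" "sort a ! i = v" by (meson in_set_conv_nth)
  then have i: "i < n" "v = sort a ! i" using assms(1) by auto
  then show "v \<in> {1..n+1}" using assms(2) assms(1) unfolding parking_function_def by auto
qed

definition PFix :: "nat \<Rightarrow> (nat \<Rightarrow> nat) \<Rightarrow> nat list set" where
  "PFix n \<sigma> = {a \<in> parking_functions n. perm_act \<sigma> a = a}"

lemma card_PFix_mult: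
  assumes sp: "\<sigma> permutes {..<n}"
  shows "card (PFix n \<sigma>) * (n + 1) = card (FFix n \<sigma>)"
proof -
  define m where "m = n + 1"
  have m0: "0 < m" by (simp add: m_def)
  have comm: "perm_act \<sigma> (sh m s a) = sh m s (perm_act \<sigma> a)" if "length a = n" for a s
    unfolding sh_def using perm_act_map[of \<sigma> a] sp that by simp
  have "bij_betw (\<lambda>(a, s). sh m s a) (PFix n \<sigma> \<times> {..<m}) (FFix n \<sigma>)"
  proof (rule bij_betwI')
    fix p q assume p: "p \<in> PFix n \<sigma> \<times> {..<m}" and q: "q \<in> PFix n \<sigma> \<times> {..<m}"
    obtain a s where ps: "p = (a, s)" by (cases p)
    obtain a' s' where qs: "q = (a', s')" by (cases q)
    have a: "length a = n" "parking_function a" "s < m" using p ps by (auto simp: PFix_def parking_functions_def)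
    have a': "length a' = n" "parking_function a'" "s' < m" using q qs by (auto simp: PFix_def parking_functions_def)
    have va: "set a \<subseteq> {1..n+1}" by (rule parking_vals[OF a(1,2)])
    have va': "set a' \<subseteq> {1..n+1}" by (rule parking_vals[OF a'(1,2)])
    show "((\<lambda>(a, s). sh m s a) p = (\<lambda>(a, s). sh m s a) q) = (p = q)"
    proof
      assume "(\<lambda>(a, s). sh m s a) p = (\<lambda>(a, s). sh m s a) q"
      then have e: "sh m s a = sh m s' a'" using ps qs by simp
      define t where "t = (m - s') mod m"
      define u where "u = (s + t) mod m"
      have "sh m t (sh m s' a') = a'"
        using sh_sh[of m t s' a'] add_neg_mod[OF a'(3)] sh_0 va' by (simp add: t_def m_def)
      then have a'u: "a' = sh m u a" using e sh_sh[of m t s a] by (simp add: u_def)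
      have u: "u < m" using m0 by (simp add: u_def)
      have ex1: "\<exists>!s. s < n + 1 \<and> parking_function (sh (n + 1) s a)"
        by (rule cycle_lemma[OF a(1) va])
      have p0: "0 < n + 1 \<and> parking_function (sh (n + 1) 0 a)" using sh_0[OF va] a(2) by simp
      have pu: "u < n + 1 \<and> parking_function (sh (n + 1) u a)" using a'u a'(2) u by (simp add: m_def)
      obtain w where w: "\<And>y. y < n + 1 \<and> parking_function (sh (n + 1) y a) \<Longrightarrow> y = w"
        using ex1 by blast
      have u0: "u = 0" using w[OF pu] w[OF p0] by simp
      have "s = s'" using neg_mod_zero[OF a(3) a'(3)] u0 by (simp add: u_def t_def)
      moreover have "a' = a" using a'u u0 sh_0[OF va] by (simp add: m_def)
      ultimately show "p = q" using ps qs by simp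
    qed simp
  next
    fix p assume p: "p \<in> PFix n \<sigma> \<times> {..<m}"
    obtain a s where ps: "p = (a, s)" by (cases p)
    have a: "length a = n" "perm_act \<sigma> a = a" "s < m" "parking_function a"
      using p ps by (auto simp: PFix_def parking_functions_def)
    show "(\<lambda>(a, s). sh m s a) p \<in> FFix n \<sigma>"
      using ps a comm[OF a(1)] sh_vals[OF m0] by (simp add: FFix_def m_def)
  next
    fix x assume x: "x \<in> FFix n \<sigma>"
    then have len: "length x = n" and vx: "set x \<subseteq> {1..n+1}" and fx: "perm_act \<sigma> x = x"
      by (auto simp: FFix_def)
    obtain s where s: "s < n + 1" "parking_function (sh (n + 1) s x)"
      using cycle_lemma[OF len vx] by blast
    define a where "a = sh m s x"
    define t where "t = (m - s) mod m"
    have aP: "a \<in> PFix n \<sigma>"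
      using s len comm[OF len, of s] fx by (simp add: a_def PFix_def parking_functions_def m_def)
    have t: "t < m" using m0 by (simp add: t_def)
    have "sh m t a = x"
      using sh_sh[of m t s x] add_neg_mod[of s m] s(1) sh_0 vx by (simp add: a_def t_def m_def)
    then show "\<exists>p\<in>PFix n \<sigma> \<times> {..<m}. x = (\<lambda>(a, s). sh m s a) p"
      using aP t by (intro bexI[of _ "(a, t)"]) auto
  qed
  then have "card (FFix n \<sigma>) = card (PFix n \<sigma> \<times> {..<m})" by (simp add: bij_betw_same_card)
  also have "\<dots> = card (PFix n \<sigma>) * m"
  proof (cases "finite (PFix n \<sigma>)")
    case True then show ?thesis by (simp add: card_cartesian_product)
  next
    case False
    have "finite (FFix n \<sigma>)"
    proof (rule finite_subset)
      show "FFix n \<sigma> \<subseteq> {a. set a \<subseteq> {1..n+1} \<and> length a = n}" by (auto simp: FFix_def)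
      show "finite {a. set a \<subseteq> {1..n+1} \<and> length a = n}" by (rule finite_lists_length_eq) simp
    qed
    moreover have "PFix n \<sigma> \<subseteq> FFix n \<sigma>"
      using parking_vals by (auto simp: PFix_def FFix_def parking_functions_def)
    ultimately have "finite (PFix n \<sigma>)" by (rule finite_subset[rotated])
    then show ?thesis using False by simp
  qed
  finally show ?thesis by (simp add: m_def)
qed

lemma card_PFix:
  assumes sp: "\<sigma> permutes {..<n}" and n: "1 \<le> n"
  shows "card (PFix n \<sigma>) = (n + 1) ^ (card (orb \<sigma> ` {..<n}) - 1)"
proof -
  have "orb \<sigma> 0 \<in> orb \<sigma> ` {..<n}" using n by simp
  then have "card (orb \<sigma> ` {..<n}) \<noteq> 0" by (simp add: card_eq_0_iff) blast
  then have k: "card (orb \<sigma> ` {..<n}) = Suc (card (orb \<sigma> ` {..<n}) - 1)" by presburger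
  have "card (PFix n \<sigma>) * (n + 1) = (n + 1) ^ card (orb \<sigma> ` {..<n})"
    using card_PFix_mult[OF sp] card_FFix[OF sp] by simp
  also have "\<dots> = (n + 1) ^ (card (orb \<sigma> ` {..<n}) - 1) * (n + 1)"
    by (subst k) (simp add: mult.commute)
  finally have "card (PFix n \<sigma>) * (n + 1) = (n + 1) ^ (card (orb \<sigma> ` {..<n}) - 1) * (n + 1)" .
  then show ?thesis by (metis mult_right_cancel add_gr_0 less_numeral_extra(1) less_not_refl)
qed



lemma size_le_sum_pos:
  fixes M :: "nat multiset"
  shows "\<forall>i\<in>#M. 0 < i \<Longrightarrow> size M \<le> sum_mset M"
  by (induction M) auto

lemma mem_le_sum:
  fixes M :: "nat multiset"
  shows "i \<in># M \<Longrightarrow> i \<le> sum_mset M"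
  using sum_mset.remove[of i M] by simp

lemma finite_odd_partitions: "finite (odd_partitions n)"
proof -
  have "odd_partitions n \<subseteq> mset ` {xs. set xs \<subseteq> {..n} \<and> length xs \<le> n}"
  proof
    fix lam assume lam: "lam \<in> odd_partitions n"
    then have pos: "\<forall>i\<in>#lam. 0 < i" and s: "sum_mset lam = n" by (auto simp: odd_partitions_def)
    obtain xs where xs: "mset xs = lam" using ex_mset by blast
    have "set xs \<subseteq> {..n}" using xs s mem_le_sum by fastforce
    moreover have "length xs \<le> n" using xs s size_le_sum_pos[OF pos] by (metis size_mset)
    ultimately show "lam \<in> mset ` {xs. set xs \<subseteq> {..n} \<and> length xs \<le> n}" using xs by blast
  qed
  moreover have "finite {xs. set xs \<subseteq> {..n} \<and> length xs \<le> (n::nat)}"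
    by (rule finite_lists_length_le) simp
  ultimately show ?thesis using finite_surj by blast
qed

lemma size_cycle_type:
  "size (cycle_type n \<sigma>) = card (orb \<sigma> ` {..<n})"
  by (simp add: cycle_type_ctS ctS_def)

lemma PF_value:
  assumes n: "1 \<le> n"
  shows "PF n mu = (1 / fact n) * of_nat (card {\<sigma>. \<sigma> permutes {..<n} \<and> cycle_type n \<sigma> = mu}) *
     of_nat (n + 1) ^ (size mu - 1)"
proof -
  define A where "A = {\<sigma>. \<sigma> permutes {..<n} \<and> cycle_type n \<sigma> = mu}"
  have "(\<Sum>\<sigma>\<in>A. (of_nat (card {a \<in> parking_functions n. perm_act \<sigma> a = a}) :: rat)) =
      (\<Sum>\<sigma>\<in>A. of_nat (n + 1) ^ (size mu - 1))"
  proof (rule sum.cong[OF refl])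
    fix \<sigma> assume "\<sigma> \<in> A"
    then have sp: "\<sigma> permutes {..<n}" and ct: "cycle_type n \<sigma> = mu" by (auto simp: A_def)
    have "card {a \<in> parking_functions n. perm_act \<sigma> a = a} = (n + 1) ^ (size mu - 1)"
      using card_PFix[OF sp n] size_cycle_type[of n \<sigma>] ct by (simp add: PFix_def)
    then show "(of_nat (card {a \<in> parking_functions n. perm_act \<sigma> a = a}) :: rat) =
        of_nat (n + 1) ^ (size mu - 1)" by simp
  qed
  then show ?thesis unfolding PF_def frob_def A_def[symmetric] by simp
qed

lemma card_A:
  assumes "\<forall>i\<in>#mu. 0 < i" "sum_mset mu = n"
  shows "of_nat (card {\<sigma>. \<sigma> permutes {..<n} \<and> cycle_type n \<sigma> = mu}) * zee mu = (fact n :: rat)"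
  using card_perms_type[of "{..<n}" mu] assms by (simp add: cycle_type_ctS)

lemma card_A_zero:
  assumes "sum_mset mu \<noteq> n"
  shows "{\<sigma>. \<sigma> permutes {..<n} \<and> cycle_type n \<sigma> = mu} = {}"
proof -
  have "sum_mset (cycle_type n \<sigma>) = n" if "\<sigma> permutes {..<n}" for \<sigma>
    using ctS_props[OF that] by (simp add: cycle_type_ctS)
  then show ?thesis using assms by auto
qed

theorem theorem2p1:
  fixes n :: nat
  assumes "n \<ge> 1"
  shows "SH n = (\<lambda>mu. \<Sum>lam\<in>odd_partitions n.
            (1 / zee lam) * 2 ^ size lam * of_nat (n + 1) ^ (size lam - 1) * psum lam mu)"
proof
  fix mu
  have rhs: "(\<Sum>lam\<in>odd_partitions n.
            (1 / zee lam) * 2 ^ size lam * of_nat (n + 1) ^ (size lam - 1) * psum lam mu) =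
      (if mu \<in> odd_partitions n then (1 / zee mu) * 2 ^ size mu * of_nat (n + 1) ^ (size mu - 1) else 0)"
  proof -
    have "(\<Sum>lam\<in>odd_partitions n.
            (1 / zee lam) * 2 ^ size lam * of_nat (n + 1) ^ (size lam - 1) * psum lam mu) =
        (\<Sum>lam\<in>odd_partitions n. if mu = lam then
            (1 / zee lam) * 2 ^ size lam * of_nat (n + 1) ^ (size lam - 1) else 0)"
      by (rule sum.cong) (auto simp: psum_def)
    also have "\<dots> = (if mu \<in> odd_partitions n then (1 / zee mu) * 2 ^ size mu * of_nat (n + 1) ^ (size mu - 1) else 0)"
      by (rule sum.delta'[OF finite_odd_partitions])
    finally show ?thesis .
  qed
  show "SH n mu = (\<Sum>lam\<in>odd_partitions n.
            (1 / zee lam) * 2 ^ size lam * of_nat (n + 1) ^ (size lam - 1) * psum lam mu)"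
  proof (cases "\<forall>i\<in>#mu. odd i")
    case False
    then have "mu \<notin> odd_partitions n" by (auto simp: odd_partitions_def)
    moreover have "SH n mu = 0" unfolding SH_def shiftify_def using False by (simp only: if_False)
    ultimately show ?thesis using rhs by simp
  next
    case True
    then have pos: "\<forall>i\<in>#mu. 0 < i" by (metis odd_pos)
    show ?thesis
    proof (cases "sum_mset mu = n")
      case False
      then have "mu \<notin> odd_partitions n" by (auto simp: odd_partitions_def)
      moreover have "PF n mu = 0" unfolding PF_value[OF assms, of mu] card_A_zero[OF False] by simp
      ultimately show ?thesis using True rhs by (simp add: SH_def shiftify_def)
    next
      case s: True
      then have mem: "mu \<in> odd_partitions n" using True pos by (auto simp: odd_partitions_def)
      have nz: "zee mu \<noteq> 0" by (rule zee_nonzero[OF pos])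
      have c: "of_nat (card {\<sigma>. \<sigma> permutes {..<n} \<and> cycle_type n \<sigma> = mu}) = (fact n :: rat) / zee mu"
        using card_A[OF pos s] nz by (simp add: field_simps)
      have "PF n mu = (1 / zee mu) * of_nat (n + 1) ^ (size mu - 1)"
        using PF_value[OF assms, of mu] c by simp
      then show ?thesis using True rhs mem by (simp add: SH_def shiftify_def)
    qed
  qed
qed


end
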